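(* Let $S$ and $T$ be valid configurations and $M:S\to T$ a bijection. Let $A=(A^S,A^T)$ and $B=(B^S,B^T)$ be two distinct pairs of $M$. Define $$\mathcal V^{(1)}_{AB}=\{\vec v\in\mathbb R^2 : D(A^S)\cap H_{\vec v}(B)\neq\emptyset\},\qquad \mathcal V^{(2)}_{AB}=\{\vec v\in\mathbb R^2 : D(B^T+\vec v)\cap H_{\vec v}(A)\neq\emptyset\}.$$ Then $$\mathcal V^{(1)}_{AB}=\bigl(W(A^S,B^S)\oplus D_2(o)\bigr)-B^T,\qquad \mathcal V^{(2)}_{AB}=\bigl(-W(B^T,A^T)\bigr)\oplus D_2(o)+A^S,$$ where $\oplus$ denotes Minkowski sum, $-X=\{-x:x\in X\}$, and $X+p=\{x+p:x\in X\}$.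
   Context: For $p\in\mathbb R^2$, $D(p)$ is the open unit disc centered at $p$ and $D_2(p)$ is the open disc of radius $2$ centered at $p$; $o$ is the origin. A configuration is a finite set of points in $\mathbb R^2$; it is valid if any two distinct points of it are at distance at least $2$. A pair of the bijection $M$ is $A=(A^S,A^T)$ with $A^S\in S$, $A^T=M(A^S)$. For a translation $\vec v\in\mathbb R^2$, the hippodrome $H_{\vec v}(A)$ is the convex hull of $D(A^S)\cup D(A^T+\vec v)$ (the region swept by a unit disc translated along the segment from $A^S$ to $A^T+\vec v$). For two points $a,b$ with $|a-b|\ge 2$, the wedge $W(a,b)$ is the closed wedge with apex $a$ whose bounding rays are parallel to, and directed like, the two common inner tangents of $D(b)$ and $D(a)$ directed from $b$ towards $a$; explicitly, $W(a,b)=\{a\}\cup\{a+w: w\neq 0,\ \angle(w,a-b)\le \arcsin(2/|a-b|)\}$, where $\angle(w,u)\in[0,\pi]$ is the angle between vectors $w$ and $u$. *)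

theory Defs
  imports "HOL-Analysis.Analysis"
begin

type_synonym point = "real ^ 2"

definition valid_config :: "point set \<Rightarrow> bool" where
  "valid_config C \<longleftrightarrow> finite C \<and> (\<forall>p\<in>C. \<forall>q\<in>C. p \<noteq> q \<longrightarrow> dist p q \<ge> 2)"

definition D :: "point \<Rightarrow> point set" where "D p = ball p 1"
definition D2 :: "point \<Rightarrow> point set" where "D2 p = ball p 2"

definition hippodrome :: "point \<Rightarrow> point \<Rightarrow> point \<Rightarrow> point set" where
  "hippodrome AS AT v = convex hull (D AS \<union> D (AT + v))"

definition vec_angle :: "point \<Rightarrow> point \<Rightarrow> real" where
  "vec_angle w u = arccos ((w \<bullet> u) / (norm w * norm u))"

definition wedge :: "point \<Rightarrow> point \<Rightarrow> point set" where
  "wedge a b = {a} \<union> {a + w | w. w \<noteq> 0 \<and> vec_angle w (a - b) \<le> arcsin (2 / dist a b)}"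

definition minkowski_sum :: "point set \<Rightarrow> point set \<Rightarrow> point set" where
  "minkowski_sum X Y = {x + y | x y. x \<in> X \<and> y \<in> Y}"

end

theory Submission
  imports Defs
begin


lemma cone_ineq:
  fixes q g :: point
  assumes q: "norm q \<le> 2" and g: "norm g \<ge> 2"
  shows "norm (q + g) * sqrt ((norm g)\<^sup>2 - 4) \<le> (q + g) \<bullet> g"
proof -
  define y where "y = q \<bullet> g"
  define n where "n = (norm q)\<^sup>2"
  define d where "d = norm g"
  have ay: "\<bar>y\<bar> \<le> 2 * d" unfolding y_def d_def
    using Cauchy_Schwarz_ineq2[of q g] q mult_right_mono[OF q, of "norm g"] by auto
  have gg: "g \<bullet> g = d\<^sup>2" by (simp add: d_def power2_norm_eq_inner)
  have d2: "d \<ge> 2" using g d_def by simp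
  have "2 * d \<le> d\<^sup>2" using d2 by (simp add: power2_eq_square)
  hence L0: "0 \<le> (q + g) \<bullet> g" using ay gg by (simp add: inner_add_left y_def)
  have n4: "n \<le> 4" unfolding n_def using power_mono[OF q, of 2] by simp
  have nq: "(norm (q + g))\<^sup>2 = n + 2 * y + d\<^sup>2"
    by (simp add: power2_norm_eq_inner n_def y_def gg inner_add_left inner_add_right inner_commute)
  have key: "(y + d\<^sup>2)\<^sup>2 - (n + 2*y + d\<^sup>2) * (d\<^sup>2 - 4) = (y+4)\<^sup>2 + (4 - n) * (d\<^sup>2 - 4)"
    by (simp add: algebra_simps power2_eq_square)
  have d4: "d\<^sup>2 \<ge> 4" using d2 power_mono[OF d2, of 2] by simp
  have "(4 - n) * (d\<^sup>2 - 4) \<ge> 0" using n4 d4 by simp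
  hence le: "(n + 2*y + d\<^sup>2) * (d\<^sup>2 - 4) \<le> (y + d\<^sup>2)\<^sup>2" using key
    using zero_le_power2[of "y+4"] by linarith
  have e1: "(norm (q + g) * sqrt (d\<^sup>2 - 4))\<^sup>2 = (n + 2*y + d\<^sup>2) * (d\<^sup>2 - 4)"
    using d4 by (simp add: power_mult_distrib nq)
  have e2: "(y + d\<^sup>2) = (q + g) \<bullet> g" by (simp add: inner_add_left y_def gg)
  have A: "(norm (q + g) * sqrt (d\<^sup>2 - 4))\<^sup>2 \<le> ((q + g) \<bullet> g)\<^sup>2" using le e1 e2
    by simp
  have "norm (q + g) * sqrt (d\<^sup>2 - 4) \<le> (q + g) \<bullet> g" by (rule power2_le_imp_le[OF A L0])
  thus ?thesis by (simp add: d_def)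
qed

lemma mu_exists:
  fixes w g :: point
  assumes g: "norm g \<ge> 2" and w: "norm w * sqrt ((norm g)\<^sup>2 - 4) \<le> w \<bullet> g" and dl: "\<delta> > 0"
  shows "\<exists>\<mu>\<ge>0. norm (w - \<mu> *\<^sub>R g) < 2 * \<mu> + \<delta>"
proof -
  define y where "y = w \<bullet> g"
  define d where "d = norm g"
  have d4: "d\<^sup>2 \<ge> 4" using g power_mono[OF g, of 2] by (simp add: d_def)
  have y0: "y \<ge> 0"
  proof -
    have "0 \<le> norm w * sqrt ((norm g)\<^sup>2 - 4)" using d4 unfolding d_def by simp
    thus ?thesis using w unfolding y_def by linarith
  qed
  have ysq: "(norm w)\<^sup>2 * (d\<^sup>2 - 4) \<le> y\<^sup>2"
  proof -
    have "(norm w * sqrt (d\<^sup>2 - 4))\<^sup>2 \<le> y\<^sup>2" using w d4 unfolding y_def d_def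
      by (intro power_mono) auto
    thus ?thesis using d4 by (simp add: power_mult_distrib)
  qed
  have expand: "\<And>\<mu>. (norm (w - \<mu> *\<^sub>R g))\<^sup>2 = (norm w)\<^sup>2 - 2 * \<mu> * y + \<mu>\<^sup>2 * d\<^sup>2"
    by (simp only: power2_norm_eq_inner y_def d_def)
      (simp add: inner_diff_left inner_diff_right inner_commute power2_eq_square algebra_simps)
  have suff: "\<exists>\<mu>\<ge>0. (norm w)\<^sup>2 - 2 * \<mu> * y + \<mu>\<^sup>2 * d\<^sup>2 < (2 * \<mu> + \<delta>)\<^sup>2"
  proof (cases "d\<^sup>2 > 4")
    case True
    define \<mu> where "\<mu> = y / (d\<^sup>2 - 4)"
    have m0: "\<mu> \<ge> 0" using True y0 by (simp add: \<mu>_def)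
    have hm: "\<mu> * (d\<^sup>2 - 4) = y" using True by (simp add: \<mu>_def)
    have h2: "\<mu>\<^sup>2 * (d\<^sup>2 - 4) = \<mu> * y" using hm by (simp add: power2_eq_square mult.assoc)
    have "(norm w)\<^sup>2 * (d\<^sup>2 - 4) \<le> (\<mu> * y) * (d\<^sup>2 - 4)"
    proof -
      have "\<mu> * y * (d\<^sup>2 - 4) = y * (\<mu> * (d\<^sup>2 - 4))" by (simp only: mult_ac)
      also have "\<dots> = y\<^sup>2" unfolding hm by (simp add: power2_eq_square)
      finally show ?thesis using ysq by simp
    qed
    hence "(norm w)\<^sup>2 \<le> \<mu> * y" using True by (simp add: mult_le_cancel_right)
    hence "(norm w)\<^sup>2 - 2 * \<mu> * y + \<mu>\<^sup>2 * (d\<^sup>2 - 4) \<le> 0" using h2 by simp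
    hence "(norm w)\<^sup>2 - 2 * \<mu> * y + \<mu>\<^sup>2 * d\<^sup>2 \<le> 4 * \<mu>\<^sup>2"
      by (simp add: algebra_simps)
    also have "\<dots> < (2 * \<mu> + \<delta>)\<^sup>2" using m0 dl by (simp add: power2_eq_square algebra_simps add_pos_nonneg)
    finally show ?thesis using m0 by blast
  next
    case False
    hence dd: "d\<^sup>2 = 4" using d4 by simp
    define \<mu> where "\<mu> = (norm w)\<^sup>2 / (2 * (y + 2 * \<delta>))"
    have yd: "y + \<delta> > 0" using y0 dl by simp
    have yd2: "y + 2 * \<delta> > 0" using y0 dl by simp
    have m0: "\<mu> \<ge> 0" unfolding \<mu>_def using yd2 by (intro divide_nonneg_nonneg) auto
    have mm: "2 * \<mu> * (y + 2 * \<delta>) = (norm w)\<^sup>2" unfolding \<mu>_def using yd2 by (simp add: field_simps)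
    have "(norm w)\<^sup>2 - 2 * \<mu> * y + \<mu>\<^sup>2 * d\<^sup>2 - (2 * \<mu> + \<delta>)\<^sup>2
        = (norm w)\<^sup>2 - 2 * \<mu> * (y + 2 * \<delta>) - \<delta>\<^sup>2"
      unfolding dd by (simp add: power2_eq_square algebra_simps)
    also have "\<dots> = - \<delta>\<^sup>2" using mm by simp
    finally have E: "(norm w)\<^sup>2 - 2 * \<mu> * y + \<mu>\<^sup>2 * d\<^sup>2 - (2 * \<mu> + \<delta>)\<^sup>2 = - \<delta>\<^sup>2" .
    have "\<delta>\<^sup>2 > 0" using dl by simp
    hence "(norm w)\<^sup>2 - 2 * \<mu> * y + \<mu>\<^sup>2 * d\<^sup>2 < (2 * \<mu> + \<delta>)\<^sup>2" using E by linarith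
    thus ?thesis using m0 by blast
  qed
  then obtain \<mu> where m0: "\<mu> \<ge> 0" and lt0: "(norm w)\<^sup>2 - 2 * \<mu> * y + \<mu>\<^sup>2 * d\<^sup>2 < (2 * \<mu> + \<delta>)\<^sup>2"
    by blast
  have lt: "(norm (w - \<mu> *\<^sub>R g))\<^sup>2 < (2 * \<mu> + \<delta>)\<^sup>2" unfolding expand by (rule lt0)
  have "norm (w - \<mu> *\<^sub>R g) < 2 * \<mu> + \<delta>"
  proof (rule power2_less_imp_less[OF lt])
    show "0 \<le> 2 * \<mu> + \<delta>" using m0 dl by simp
  qed
  thus ?thesis using m0 by blast
qed

lemma core:
  fixes a b p :: point
  assumes ab: "norm (a - b) \<ge> 2"
  shows "(\<exists>t. 0 \<le> t \<and> t \<le> 1 \<and> norm (b + t *\<^sub>R (p - b) - a) < 2) \<longleftrightarrow>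
    (\<exists>w z. p = a + w + z \<and> norm w * sqrt ((norm (a - b))\<^sup>2 - 4) \<le> w \<bullet> (a - b) \<and> norm z < 2)"
proof
  define g where "g = a - b"
  assume "\<exists>t. 0 \<le> t \<and> t \<le> 1 \<and> norm (b + t *\<^sub>R (p - b) - a) < 2"
  then obtain t where t0: "0 \<le> t" and t1: "t \<le> 1" and tq: "norm (b + t *\<^sub>R (p - b) - a) < 2" by blast
  define q where "q = b + t *\<^sub>R (p - b) - a"
  have tpos: "t > 0"
  proof (rule ccontr)
    assume "\<not> t > 0" hence "t = 0" using t0 by simp
    hence "norm (a - b) < 2" using tq by (simp add: norm_minus_commute)
    thus False using ab by simp
  qed
  have qg: "q + g = t *\<^sub>R (p - b)" by (simp add: q_def g_def algebra_simps)
  define w where "w = (1/t - 1) *\<^sub>R (q + g)"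
  have c0: "1/t - 1 \<ge> 0" using tpos t1 by (simp add: field_simps)
  have pw: "p = a + w + q"
  proof -
    have "(1/t) *\<^sub>R (q + g) = p - b" using qg tpos by simp
    hence "w = p - b - (q + g)" by (simp add: w_def algebra_simps)
    thus ?thesis by (simp add: g_def)
  qed
  have "norm (q + g) * sqrt ((norm g)\<^sup>2 - 4) \<le> (q + g) \<bullet> g"
    using cone_ineq[of q g] tq ab by (simp add: q_def g_def)
  hence "(1/t - 1) * (norm (q + g) * sqrt ((norm g)\<^sup>2 - 4)) \<le> (1/t - 1) * ((q + g) \<bullet> g)"
    using c0 by (rule mult_left_mono)
  hence "norm w * sqrt ((norm g)\<^sup>2 - 4) \<le> w \<bullet> g"
    using c0 by (simp add: w_def mult.assoc)
  moreover have "norm q < 2" using tq by (simp add: q_def)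
  ultimately show "\<exists>w z. p = a + w + z \<and> norm w * sqrt ((norm (a - b))\<^sup>2 - 4) \<le> w \<bullet> (a - b) \<and> norm z < 2"
    using pw unfolding g_def by blast
next
  define g where "g = a - b"
  assume "\<exists>w z. p = a + w + z \<and> norm w * sqrt ((norm (a - b))\<^sup>2 - 4) \<le> w \<bullet> (a - b) \<and> norm z < 2"
  then obtain w z where p: "p = a + w + z" and wc: "norm w * sqrt ((norm g)\<^sup>2 - 4) \<le> w \<bullet> g"
    and z: "norm z < 2" by (auto simp: g_def)
  obtain \<mu> where m0: "\<mu> \<ge> 0" and mu: "norm (w - \<mu> *\<^sub>R g) < 2 * \<mu> + (2 - norm z)"
    using mu_exists[of g w "2 - norm z"] ab wc z by (auto simp: g_def)
  define t where "t = 1 / (1 + \<mu>)"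
  have tp: "t > 0" "t \<le> 1" using m0 by (auto simp: t_def)
  have eq: "b + t *\<^sub>R (p - b) - a = t *\<^sub>R (w - \<mu> *\<^sub>R g + z)"
  proof -
    have t1: "t - 1 = - (t * \<mu>)" using m0 by (simp add: t_def field_simps)
    have "b + t *\<^sub>R (p - b) - a = (t - 1) *\<^sub>R (a - b) + t *\<^sub>R (w + z)"
      by (simp add: p algebra_simps)
    also have "\<dots> = t *\<^sub>R (w - \<mu> *\<^sub>R g + z)" unfolding t1 by (simp add: g_def algebra_simps)
    finally show ?thesis .
  qed
  have "norm (w - \<mu> *\<^sub>R g + z) \<le> norm (w - \<mu> *\<^sub>R g) + norm z" by (rule norm_triangle_ineq)
  hence lt: "norm (w - \<mu> *\<^sub>R g + z) < 2 * (1 + \<mu>)" using mu by simp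
  have "norm (b + t *\<^sub>R (p - b) - a) = t * norm (w - \<mu> *\<^sub>R g + z)" using eq tp by simp
  also have "\<dots> < t * (2 * (1 + \<mu>))" using lt tp by simp
  also have "\<dots> = 2" proof -
    have ne: "1 + \<mu> \<noteq> 0" using m0 by simp
    show ?thesis unfolding t_def using ne by (simp add: field_simps)
  qed
  finally show "\<exists>t. 0 \<le> t \<and> t \<le> 1 \<and> norm (b + t *\<^sub>R (p - b) - a) < 2" using tp less_imp_le by blast
qed


lemma wedge_mem:
  fixes a b x :: point
  assumes ab: "dist a b \<ge> 2"
  shows "x \<in> wedge a b \<longleftrightarrow> norm (x - a) * sqrt ((norm (a - b))\<^sup>2 - 4) \<le> (x - a) \<bullet> (a - b)"
proof (cases "x = a")
  case True thus ?thesis by (simp add: wedge_def)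
next
  case False
  define w where "w = x - a"
  define g where "g = a - b"
  define d where "d = norm g"
  have w0: "w \<noteq> 0" using False by (simp add: w_def)
  have d2: "d \<ge> 2" using ab by (simp add: d_def g_def dist_norm)
  have dab: "dist a b = d" by (simp add: d_def g_def dist_norm)
  define c where "c = (w \<bullet> g) / (norm w * d)"
  have nwd: "norm w * d > 0" using w0 d2 by simp
  have cb: "-1 \<le> c \<and> c \<le> 1"
  proof -
    have "\<bar>w \<bullet> g\<bar> \<le> norm w * d" using Cauchy_Schwarz_ineq2[of w g] by (simp add: d_def)
    moreover have "\<bar>c\<bar> = \<bar>w \<bullet> g\<bar> / (norm w * d)" unfolding c_def using nwd by (simp add: abs_divide)
    ultimately have "\<bar>c\<bar> \<le> 1" using nwd by (simp add: divide_le_eq_1_pos)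
    thus ?thesis by linarith
  qed
  define s where "s = 2 / d"
  have s01: "0 \<le> s" "s \<le> 1" using d2 by (auto simp: s_def)
  have as: "0 \<le> arcsin s" "arcsin s \<le> pi" using s01 arcsin_le_arcsin[of 0 s] arcsin_ubound[of s]
    by auto
  have ac: "0 \<le> arccos c" "arccos c \<le> pi" using arccos_bounded cb by auto
  have "vec_angle w g \<le> arcsin s \<longleftrightarrow> arccos c \<le> arcsin s"
    by (simp add: vec_angle_def c_def d_def)
  also have "\<dots> \<longleftrightarrow> cos (arcsin s) \<le> cos (arccos c)"
    using cos_mono_le_eq[of "arcsin s" "arccos c"] as ac by simp
  also have "\<dots> \<longleftrightarrow> sqrt (1 - s\<^sup>2) \<le> c" using cb s01 by (simp add: cos_arcsin)
  also have "\<dots> \<longleftrightarrow> norm w * (d * sqrt (1 - s\<^sup>2)) \<le> w \<bullet> g"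
    using nwd by (simp add: c_def le_divide_eq mult.commute mult.left_commute mult.assoc)
  also have "d * sqrt (1 - s\<^sup>2) = sqrt (d\<^sup>2 - 4)"
  proof -
    have "d * sqrt (1 - s\<^sup>2) = sqrt (d\<^sup>2) * sqrt (1 - s\<^sup>2)" using d2 by simp
    also have "\<dots> = sqrt (d\<^sup>2 * (1 - s\<^sup>2))" by (simp add: real_sqrt_mult)
    also have "d\<^sup>2 * (1 - s\<^sup>2) = d\<^sup>2 - 4" using d2 by (simp add: s_def field_simps power2_eq_square)
    finally show ?thesis .
  qed
  finally have eq: "vec_angle w g \<le> arcsin s \<longleftrightarrow> norm w * sqrt (d\<^sup>2 - 4) \<le> w \<bullet> g" .
  have "x \<in> wedge a b \<longleftrightarrow> vec_angle w g \<le> arcsin s"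
    using w0 False unfolding wedge_def s_def dab[symmetric] g_def w_def
    apply (auto simp: algebra_simps)
    apply (rule exI[of _ "x - a"])
    apply simp
    done
  thus ?thesis using eq by (simp add: w_def g_def d_def)
qed


lemma hull_meets:
  fixes a b p :: point
  shows "ball a 1 \<inter> convex hull (ball b 1 \<union> ball p 1) \<noteq> {} \<longleftrightarrow>
    (\<exists>t. 0 \<le> t \<and> t \<le> 1 \<and> norm (b + t *\<^sub>R (p - b) - a) < 2)"
proof
  define H where "H = (\<Union>c\<in>closed_segment b p. \<Union>e\<in>ball (0::point) 1. {c + e})"
  have cH: "convex H" unfolding H_def by (intro convex_sums convex_closed_segment convex_ball)
  have sub: "ball b 1 \<union> ball p 1 \<subseteq> H"
  proof
    fix y assume y: "y \<in> ball b 1 \<union> ball p 1"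
    show "y \<in> H"
    proof (cases "y \<in> ball b 1")
      case True
      hence "y - b \<in> ball 0 1" by (simp add: dist_norm norm_minus_commute)
      moreover have "b \<in> closed_segment b p" by simp
      ultimately show ?thesis unfolding H_def by force
    next
      case False
      hence "y \<in> ball p 1" using y by simp
      hence "y - p \<in> ball 0 1" by (simp add: dist_norm norm_minus_commute)
      moreover have "p \<in> closed_segment b p" by simp
      ultimately show ?thesis unfolding H_def by force
    qed
  qed
  have hs: "convex hull (ball b 1 \<union> ball p 1) \<subseteq> H" using sub cH by (rule hull_minimal)
  assume "ball a 1 \<inter> convex hull (ball b 1 \<union> ball p 1) \<noteq> {}"
  then obtain x where xa: "x \<in> ball a 1" and xh: "x \<in> H" using hs by blast
  then obtain c e where c: "c \<in> closed_segment b p" and e: "norm e < 1" and x: "x = c + e"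
    unfolding H_def by auto
  obtain u where u: "0 \<le> u" "u \<le> 1" and cu: "c = (1 - u) *\<^sub>R b + u *\<^sub>R p"
    using c by (auto simp: in_segment)
  have "norm (c - a) \<le> norm (x - a) + norm e"
    using norm_triangle_ineq4[of "x - a" e] by (simp add: x algebra_simps)
  also have "\<dots> < 2" using xa e by (simp add: dist_norm norm_minus_commute)
  finally have "norm (b + u *\<^sub>R (p - b) - a) < 2" by (simp add: cu algebra_simps)
  thus "\<exists>t. 0 \<le> t \<and> t \<le> 1 \<and> norm (b + t *\<^sub>R (p - b) - a) < 2" using u by blast
next
  assume "\<exists>t. 0 \<le> t \<and> t \<le> 1 \<and> norm (b + t *\<^sub>R (p - b) - a) < 2"
  then obtain t where t: "0 \<le> t" "t \<le> 1" and n: "norm (b + t *\<^sub>R (p - b) - a) < 2" by blast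
  define c where "c = b + t *\<^sub>R (p - b)"
  define e where "e = (1/2) *\<^sub>R (a - c)"
  have ne: "norm e < 1" using n by (simp add: e_def c_def norm_minus_commute)
  have "b + e \<in> ball b 1" using ne by (simp add: dist_norm)
  moreover have "p + e \<in> ball p 1" using ne by (simp add: dist_norm)
  ultimately have "(1 - t) *\<^sub>R (b + e) + t *\<^sub>R (p + e) \<in> convex hull (ball b 1 \<union> ball p 1)"
    using t by (intro convexD_alt convex_convex_hull) (auto intro: hull_inc)
  moreover have "(1 - t) *\<^sub>R (b + e) + t *\<^sub>R (p + e) = c + e" by (simp add: c_def algebra_simps)
  moreover have "c + e \<in> ball a 1"
  proof -
    have ee: "e + e = a - c" unfolding e_def by (simp only: scaleR_add_left[symmetric]) simp
    have "a - (c + e) = e" using ee by (simp add: algebra_simps)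
    hence "dist a (c + e) = norm e" by (simp only: dist_norm)
    thus ?thesis using ne by (simp only: mem_ball)
  qed
  ultimately show "ball a 1 \<inter> convex hull (ball b 1 \<union> ball p 1) \<noteq> {}" by auto
qed


theorem mainTheorem1:
  fixes S T :: "point set" and M :: "point \<Rightarrow> point" and AS BS :: point
  assumes "valid_config S" and "valid_config T" and "bij_betw M S T"
    and "AS \<in> S" and "BS \<in> S" and "AS \<noteq> BS"
  shows "{v. D AS \<inter> hippodrome BS (M BS) v \<noteq> {}}
           = (\<lambda>x. x - M BS) ` minkowski_sum (wedge AS BS) (D2 0)
       \<and> {v. D (M BS + v) \<inter> hippodrome AS (M AS) v \<noteq> {}}
           = (\<lambda>x. x + AS) ` minkowski_sum (uminus ` wedge (M BS) (M AS)) (D2 0)"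
proof -
  have dS: "dist AS BS \<ge> 2" using assms(1,4,5,6) unfolding valid_config_def by blast
  have inj: "M AS \<noteq> M BS" using assms(3,4,5,6) unfolding bij_betw_def inj_on_def by blast
  have MT: "M AS \<in> T" "M BS \<in> T" using assms(3,4,5) bij_betwE by blast+
  have dT: "dist (M BS) (M AS) \<ge> 2" using assms(2) MT inj unfolding valid_config_def by metis
  define AT where "AT = M AS"
  define BT where "BT = M BS"
  have nS: "norm (AS - BS) \<ge> 2" using dS by (simp add: dist_norm)
  have nT: "norm (BT - AT) \<ge> 2" using dT by (simp add: dist_norm AT_def BT_def)
  define K1 where "K1 = (\<lambda>w::point. norm w * sqrt ((norm (AS - BS))\<^sup>2 - 4) \<le> w \<bullet> (AS - BS))"
  define K2 where "K2 = (\<lambda>w::point. norm w * sqrt ((norm (BT - AT))\<^sup>2 - 4) \<le> w \<bullet> (BT - AT))"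
  have W1: "\<And>x. x \<in> wedge AS BS \<longleftrightarrow> K1 (x - AS)" using wedge_mem[OF dS] by (simp add: K1_def)
  have W2: "\<And>x. x \<in> wedge BT AT \<longleftrightarrow> K2 (x - BT)" using wedge_mem[OF dT] by (simp add: K2_def AT_def BT_def)
  have P1: "{v. D AS \<inter> hippodrome BS BT v \<noteq> {}} = (\<lambda>x. x - BT) ` minkowski_sum (wedge AS BS) (D2 0)"
  proof (rule set_eqI)
    fix v
    have "v \<in> {v. D AS \<inter> hippodrome BS BT v \<noteq> {}} \<longleftrightarrow>
      (\<exists>t. 0 \<le> t \<and> t \<le> 1 \<and> norm (BS + t *\<^sub>R ((BT + v) - BS) - AS) < 2)"
      using hull_meets[of AS BS "BT + v"] by (simp add: D_def hippodrome_def)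
    also have "\<dots> \<longleftrightarrow> (\<exists>w z. BT + v = AS + w + z \<and> K1 w \<and> norm z < 2)"
      using core[OF nS, of "BT + v"] by (simp add: K1_def)
    also have "\<dots> \<longleftrightarrow> v \<in> (\<lambda>x. x - BT) ` minkowski_sum (wedge AS BS) (D2 0)"
    proof
      assume "\<exists>w z. BT + v = AS + w + z \<and> K1 w \<and> norm z < 2"
      then obtain w z where e: "BT + v = AS + w + z" and k: "K1 w" and z: "norm z < 2" by blast
      have "AS + w \<in> wedge AS BS" using W1 k by simp
      moreover have "z \<in> D2 0" using z by (simp add: D2_def)
      ultimately have "AS + w + z \<in> minkowski_sum (wedge AS BS) (D2 0)"
        unfolding minkowski_sum_def by blast
      moreover have "v = (AS + w + z) - BT" using e by (simp add: algebra_simps)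
      ultimately show "v \<in> (\<lambda>x. x - BT) ` minkowski_sum (wedge AS BS) (D2 0)" by blast
    next
      assume "v \<in> (\<lambda>x. x - BT) ` minkowski_sum (wedge AS BS) (D2 0)"
      then obtain x y where v: "v = x + y - BT" and x: "x \<in> wedge AS BS" and y: "y \<in> D2 0"
        unfolding minkowski_sum_def by blast
      have "K1 (x - AS)" using W1 x by simp
      moreover have "norm y < 2" using y by (simp add: D2_def)
      moreover have "BT + v = AS + (x - AS) + y" using v by (simp add: algebra_simps)
      ultimately show "\<exists>w z. BT + v = AS + w + z \<and> K1 w \<and> norm z < 2" by blast
    qed
    finally show "v \<in> {v. D AS \<inter> hippodrome BS BT v \<noteq> {}} \<longleftrightarrow>
      v \<in> (\<lambda>x. x - BT) ` minkowski_sum (wedge AS BS) (D2 0)" .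
  qed
  have P2: "{v. D (BT + v) \<inter> hippodrome AS AT v \<noteq> {}}
           = (\<lambda>x. x + AS) ` minkowski_sum (uminus ` wedge BT AT) (D2 0)"
  proof (rule set_eqI)
    fix v
    have "v \<in> {v. D (BT + v) \<inter> hippodrome AS AT v \<noteq> {}} \<longleftrightarrow>
      (\<exists>t. 0 \<le> t \<and> t \<le> 1 \<and> norm (AS + t *\<^sub>R ((AT + v) - AS) - (BT + v)) < 2)"
      using hull_meets[of "BT + v" AS "AT + v"] by (simp add: D_def hippodrome_def)
    also have "\<dots> \<longleftrightarrow> (\<exists>t. 0 \<le> t \<and> t \<le> 1 \<and> norm (AT + t *\<^sub>R ((AS - v) - AT) - BT) < 2)"
    proof -
      have id: "\<And>t. AS + t *\<^sub>R ((AT + v) - AS) - (BT + v) = AT + (1 - t) *\<^sub>R ((AS - v) - AT) - BT"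
        by (simp add: algebra_simps)
      show ?thesis
      proof
        assume "\<exists>t. 0 \<le> t \<and> t \<le> 1 \<and> norm (AS + t *\<^sub>R ((AT + v) - AS) - (BT + v)) < 2"
        then obtain t where "0 \<le> t" "t \<le> 1" "norm (AT + (1 - t) *\<^sub>R ((AS - v) - AT) - BT) < 2"
          unfolding id by blast
        thus "\<exists>t. 0 \<le> t \<and> t \<le> 1 \<and> norm (AT + t *\<^sub>R ((AS - v) - AT) - BT) < 2"
          by (intro exI[of _ "1 - t"]) simp
      next
        assume "\<exists>t. 0 \<le> t \<and> t \<le> 1 \<and> norm (AT + t *\<^sub>R ((AS - v) - AT) - BT) < 2"
        then obtain t where t: "0 \<le> t" "t \<le> 1" "norm (AT + t *\<^sub>R ((AS - v) - AT) - BT) < 2" by blast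
        hence "norm (AS + (1 - t) *\<^sub>R ((AT + v) - AS) - (BT + v)) < 2" unfolding id by simp
        thus "\<exists>t. 0 \<le> t \<and> t \<le> 1 \<and> norm (AS + t *\<^sub>R ((AT + v) - AS) - (BT + v)) < 2"
          using t by (intro exI[of _ "1 - t"]) simp
      qed
    qed
    also have "\<dots> \<longleftrightarrow> (\<exists>w z. AS - v = BT + w + z \<and> K2 w \<and> norm z < 2)"
      using core[OF nT, of "AS - v"] by (simp add: K2_def)
    also have "\<dots> \<longleftrightarrow> v \<in> (\<lambda>x. x + AS) ` minkowski_sum (uminus ` wedge BT AT) (D2 0)"
    proof
      assume "\<exists>w z. AS - v = BT + w + z \<and> K2 w \<and> norm z < 2"
      then obtain w z where e: "AS - v = BT + w + z" and k: "K2 w" and z: "norm z < 2" by blast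
      have "BT + w \<in> wedge BT AT" using W2 k by simp
      hence "- (BT + w) \<in> uminus ` wedge BT AT" by blast
      moreover have "- z \<in> D2 0" using z by (simp add: D2_def)
      ultimately have "- (BT + w) + - z \<in> minkowski_sum (uminus ` wedge BT AT) (D2 0)"
        unfolding minkowski_sum_def by blast
      moreover have "v = (- (BT + w) + - z) + AS" using e by (simp add: algebra_simps)
      ultimately show "v \<in> (\<lambda>x. x + AS) ` minkowski_sum (uminus ` wedge BT AT) (D2 0)" by blast
    next
      assume "v \<in> (\<lambda>x. x + AS) ` minkowski_sum (uminus ` wedge BT AT) (D2 0)"
      then obtain x y where v: "v = - x + y + AS" and x: "x \<in> wedge BT AT" and y: "y \<in> D2 0"
        unfolding minkowski_sum_def by blast
      have "K2 (x - BT)" using W2 x by simp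
      moreover have "norm (- y) < 2" using y by (simp add: D2_def)
      moreover have "AS - v = BT + (x - BT) + - y" using v by (simp add: algebra_simps)
      ultimately show "\<exists>w z. AS - v = BT + w + z \<and> K2 w \<and> norm z < 2" by blast
    qed
    finally show "v \<in> {v. D (BT + v) \<inter> hippodrome AS AT v \<noteq> {}} \<longleftrightarrow>
      v \<in> (\<lambda>x. x + AS) ` minkowski_sum (uminus ` wedge BT AT) (D2 0)" .
  qed
  show ?thesis using P1 P2 by (simp add: AT_def BT_def)
qed

end
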